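(* The language $4\mathrm{MIX}=\{w\in\{a,b,c,d\}^*\mid |w|_a=|w|_b=|w|_c=|w|_d\}$ is not generated by any $1$-DCFG.
   Context: Let $\Sigma$ be a finite alphabet and $1\notin\Sigma$ a separator; $\Sigma_1=\Sigma\cup\{1\}$, $\mathrm{rk}(w)=|w|_1$. For $\mathrm{rk}(u)\ge j$, $u\odot_j v$ is obtained from $u$ by replacing its $j$-th occurrence of $1$ by $v$. Given a finite set $N$ of nonterminals with ranks in $\{0,1\}$, $1$-correct terms are built from nonterminals (their rank), words of $\Sigma^*$ (rank $0$), and $1$ (rank $1$) by $(\alpha\cdot\beta)$ (allowed if $\mathrm{rk}\alpha+\mathrm{rk}\beta\le 1$; rank the sum) and $(\alpha\odot_1\beta)$ (allowed if $\mathrm{rk}\alpha\ge1$, $\mathrm{rk}\alpha+\mathrm{rk}\beta\le 2$; rank $\mathrm{rk}\alpha+\mathrm{rk}\beta-1$). Ground terms (no nonterminals) have values in $\Sigma_1^*$ by interpreting $\cdot$ as concatenation and $\odot_1$ as intercalation. A $1$-DCFG $G=\langle N,\Sigma,P,S\rangle$ has $\mathrm{rk}(S)=0$ and finitely many rules $A\to\alpha$ with $\alpha$ a $1$-correct term of rank $\mathrm{rk}(A)$; derivability $\vdash_G$ is the least reflexive transitive relation such that $A\vdash_G C[B]$ and $(B\to\beta)\in P$ imply $A\vdash_G C[\beta]$ for every context $C$ (term with a single variable leaf); $L(G)$ is the set of values of ground terms $\alpha$ with $S\vdash_G\alpha$. *)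

theory Defs
  imports Main
begin

(* Words over \<Sigma>\<^sub>1 = \<Sigma> \<union> {1}: the separator 1 is represented by None,
   a letter x \<in> \<Sigma> by Some x. *)

fun ins1 :: "'t option list \<Rightarrow> 't option list \<Rightarrow> 't option list" where
  "ins1 [] v = []"
| "ins1 (None # u) v = v @ u"
| "ins1 (Some x # u) v = Some x # ins1 u v"

datatype ('n, 't) dterm =
    NT 'n
  | Word "'t list"
  | One
  | Cat "('n, 't) dterm" "('n, 't) dterm"
  | Ins "('n, 't) dterm" "('n, 't) dterm"

fun trk :: "('n \<Rightarrow> nat) \<Rightarrow> ('n, 't) dterm \<Rightarrow> nat" where
  "trk rk (NT A) = rk A"
| "trk rk (Word w) = 0"
| "trk rk One = 1"
| "trk rk (Cat a b) = trk rk a + trk rk b"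
| "trk rk (Ins a b) = trk rk a + trk rk b - 1"

fun correct1 :: "'n set \<Rightarrow> ('n \<Rightarrow> nat) \<Rightarrow> ('n, 't) dterm \<Rightarrow> bool" where
  "correct1 N rk (NT A) = (A \<in> N)"
| "correct1 N rk (Word w) = True"
| "correct1 N rk One = True"
| "correct1 N rk (Cat a b) =
     (correct1 N rk a \<and> correct1 N rk b \<and> trk rk a + trk rk b \<le> 1)"
| "correct1 N rk (Ins a b) =
     (correct1 N rk a \<and> correct1 N rk b \<and> 1 \<le> trk rk a \<and> trk rk a + trk rk b \<le> 2)"

fun ground :: "('n, 't) dterm \<Rightarrow> bool" where
  "ground (NT A) = False"
| "ground (Word w) = True"
| "ground One = True"
| "ground (Cat a b) = (ground a \<and> ground b)"
| "ground (Ins a b) = (ground a \<and> ground b)"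

fun tval :: "('n, 't) dterm \<Rightarrow> 't option list" where
  "tval (NT A) = []"
| "tval (Word w) = map Some w"
| "tval One = [None]"
| "tval (Cat a b) = tval a @ tval b"
| "tval (Ins a b) = ins1 (tval a) (tval b)"

inductive replace1 :: "'n \<Rightarrow> ('n, 't) dterm \<Rightarrow> ('n, 't) dterm \<Rightarrow> ('n, 't) dterm \<Rightarrow> bool"
  for B \<beta> where
  root: "replace1 B \<beta> (NT B) \<beta>"
| cat_l: "replace1 B \<beta> s s' \<Longrightarrow> replace1 B \<beta> (Cat s t) (Cat s' t)"
| cat_r: "replace1 B \<beta> t t' \<Longrightarrow> replace1 B \<beta> (Cat s t) (Cat s t')"
| ins_l: "replace1 B \<beta> s s' \<Longrightarrow> replace1 B \<beta> (Ins s t) (Ins s' t)"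
| ins_r: "replace1 B \<beta> t t' \<Longrightarrow> replace1 B \<beta> (Ins s t) (Ins s t')"

inductive derives :: "('n \<times> ('n, 't) dterm) set \<Rightarrow> 'n \<Rightarrow> ('n, 't) dterm \<Rightarrow> bool"
  for P where
  refl: "derives P A (NT A)"
| step: "derives P A t \<Longrightarrow> (B, \<beta>) \<in> P \<Longrightarrow> replace1 B \<beta> t t' \<Longrightarrow> derives P A t'"

(* G = <N, \<Sigma>, P, S> is a 1-DCFG, with \<Sigma> = UNIV of the terminal type *)
definition dcfg1 :: "'n set \<Rightarrow> ('n \<Rightarrow> nat) \<Rightarrow> ('n \<times> ('n, 't) dterm) set \<Rightarrow> 'n \<Rightarrow> bool" where
  "dcfg1 N rk P S \<longleftrightarrow>
     finite N \<and> (\<forall>A\<in>N. rk A \<le> 1) \<and> S \<in> N \<and> rk S = 0 \<and> finite P \<and>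
     (\<forall>(A, \<alpha>)\<in>P. A \<in> N \<and> correct1 N rk \<alpha> \<and> trk rk \<alpha> = rk A)"

definition lang :: "('n \<times> ('n, 't) dterm) set \<Rightarrow> 'n \<Rightarrow> 't option list set" where
  "lang P S = {tval t | t. derives P S t \<and> ground t}"

datatype abcd = a | b | c | d

definition count_letter :: "abcd \<Rightarrow> abcd list \<Rightarrow> nat" where
  "count_letter x w = length (filter (\<lambda>y. y = x) w)"

definition MIX4 :: "abcd list set" where
  "MIX4 = {w. count_letter a w = count_letter b w \<and> count_letter b w = count_letter c w
              \<and> count_letter c w = count_letter d w}"

end

theory Submission
  imports Defs
begin


definition cnt :: "abcd \<Rightarrow> abcd option list \<Rightarrow> nat" where
  "cnt x v = length (filter (\<lambda>z. z = Some x) v)"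

definition sz :: "abcd option list \<Rightarrow> nat" where
  "sz v = length (filter (\<lambda>z. z \<noteq> None) v)"

definition cN :: "abcd option list \<Rightarrow> nat" where
  "cN v = length (filter (\<lambda>z. z = None) v)"

lemma cnt_app[simp]: "cnt x (u @ v) = cnt x u + cnt x v" by (simp add: cnt_def)
lemma sz_app[simp]: "sz (u @ v) = sz u + sz v" by (simp add: sz_def)
lemma cN_app[simp]: "cN (u @ v) = cN u + cN v" by (simp add: cN_def)
lemma cnt_Cons[simp]: "cnt x (z # v) = (if z = Some x then 1 else 0) + cnt x v" by (simp add: cnt_def)
lemma sz_Cons[simp]: "sz (z # v) = (if z = None then 0 else 1) + sz v" by (simp add: sz_def)
lemma cN_Cons[simp]: "cN (z # v) = (if z = None then 1 else 0) + cN v" by (simp add: cN_def)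
lemma cnt_Nil[simp]: "cnt x [] = 0" by (simp add: cnt_def)
lemma sz_Nil[simp]: "sz [] = 0" by (simp add: sz_def)
lemma cN_Nil[simp]: "cN [] = 0" by (simp add: cN_def)

lemma sz_cnt: "sz v = cnt a v + cnt b v + cnt c v + cnt d v"
proof (induction v)
  case Nil thus ?case by simp
next
  case (Cons z v) thus ?case
    apply (cases z) apply simp
    subgoal for e by (cases e) auto
    done
qed

lemma cnt_le: "cnt x v \<le> length v" by (simp add: cnt_def)
lemma cnt_pos: "0 < cnt x v \<Longrightarrow> Some x \<in> set v"
  by (induction v) (auto split: if_splits)
lemma cN_zero: "cN v = 0 \<longleftrightarrow> None \<notin> set v"
  by (induction v) auto
lemma cN_map[simp]: "cN (map Some x) = 0" by (induction x) auto
lemma sz_map[simp]: "sz (map Some x) = length x" by (induction x) auto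

lemma ins1_split: "None \<in> set u \<Longrightarrow> \<exists>x y. u = x @ None # y \<and> None \<notin> set x \<and> ins1 u v = x @ v @ y"
proof (induction u)
  case Nil thus ?case by simp
next
  case (Cons z u)
  show ?case
  proof (cases z)
    case None thus ?thesis by force
  next
    case (Some e)
    with Cons obtain x y where "u = x @ None # y" "None \<notin> set x" "ins1 u v = x @ v @ y" by auto
    thus ?thesis using Some by (intro exI[of _ "Some e # x"] exI[of _ y]) auto
  qed
qed

lemma first_None_unique:
  "None \<notin> set u1 \<Longrightarrow> None \<notin> set u2 \<Longrightarrow> u1 @ None # v1 = u2 @ None # v2 \<Longrightarrow> u1 = u2 \<and> v1 = v2"
proof (induction u1 arbitrary: u2)
  case Nil thus ?case by (cases u2) auto
next
  case (Cons z u1) thus ?case by (cases u2) auto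
qed

lemma map_Some_app3: "map Some x = A @ B @ C \<Longrightarrow> \<exists>xa xb xc. x = xa@xb@xc \<and> A = map Some xa \<and> B = map Some xb \<and> C = map Some xc"
  by (metis map_eq_append_conv)

definition fits :: "abcd list \<Rightarrow> abcd option list \<Rightarrow> bool" where
  "fits w v \<longleftrightarrow> (\<exists>p x r. w = p @ x @ r \<and> v = map Some x) \<or>
     (\<exists>p x q y r. w = p @ x @ q @ y @ r \<and> v = map Some x @ None # map Some y)"

lemma fits_mid: assumes "fits w (A @ B @ C)" shows "fits w B"
proof -
  from assms consider (f) p x r where "w = p @ x @ r" "A @ B @ C = map Some x"
    | (s) p x q y r where "w = p @ x @ q @ y @ r" "A @ B @ C = map Some x @ None # map Some y"
    unfolding fits_def by metis
  thus ?thesis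
  proof cases
    case f
    then obtain xa xb xc where "x = xa@xb@xc" "B = map Some xb" by (metis map_Some_app3)
    with f show ?thesis unfolding fits_def by (metis append.assoc)
  next
    case s
    have c1: "cN A + cN B + cN C = 1" using arg_cong[OF s(2), of cN] by simp
    show ?thesis
    proof (cases "cN B = 1")
      case True
      hence "None \<in> set B" by (metis cN_zero zero_neq_one)
      then obtain B1 B2 where B: "B = B1 @ None # B2" "None \<notin> set B1" by (metis split_list_first)
      have "None \<notin> set A" using c1 True cN_zero by fastforce
      hence "(A @ B1) @ None # (B2 @ C) = map Some x @ None # map Some y" using s(2) B by simp
      hence e: "A @ B1 = map Some x" "B2 @ C = map Some y"
        using first_None_unique[of "A@B1" "map Some x"] B \<open>None \<notin> set A\<close> by auto
      from e(1) obtain xa xb where "x = xa @ xb" "B1 = map Some xb" by (metis map_eq_append_conv)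
      moreover from e(2) obtain ya yb where "y = ya @ yb" "B2 = map Some ya" by (metis map_eq_append_conv)
      ultimately show ?thesis using s(1) B unfolding fits_def
        by (intro disjI2 exI[of _ "p@xa"] exI[of _ xb] exI[of _ q] exI[of _ ya] exI[of _ "yb@r"]) auto
    next
      case False
      hence nB: "None \<notin> set B" using c1 cN_zero by fastforce
      show ?thesis
      proof (cases "cN A = 1")
        case True
        hence "None \<in> set A" by (metis cN_zero zero_neq_one)
        then obtain A1 A2 where A: "A = A1 @ None # A2" "None \<notin> set A1" by (metis split_list_first)
        have "A1 @ None # (A2 @ B @ C) = map Some x @ None # map Some y" using s(2) A by simp
        hence "A2 @ B @ C = map Some y" using first_None_unique[of A1 "map Some x"] A by auto
        then obtain ya yb yc where "y = ya@yb@yc" "B = map Some yb" by (metis map_Some_app3)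
        thus ?thesis using s(1) unfolding fits_def
          by (intro disjI1 exI[of _ "p@x@q@ya"] exI[of _ yb] exI[of _ "yc@r"]) auto
      next
        case False
        hence "cN C = 1" "cN A = 0" using c1 \<open>cN B \<noteq> 1\<close> by auto
        hence "None \<in> set C" "None \<notin> set A" by (metis cN_zero zero_neq_one)+
        then obtain C1 C2 where C: "C = C1 @ None # C2" "None \<notin> set C1" by (metis split_list_first)
        have "(A @ B @ C1) @ None # C2 = map Some x @ None # map Some y" using s(2) C by simp
        hence "A @ B @ C1 = map Some x" using first_None_unique[of "A@B@C1" "map Some x"] C nB \<open>None \<notin> set A\<close> by auto
        then obtain xa xb xc where "x = xa@xb@xc" "B = map Some xb" by (metis map_Some_app3)
        thus ?thesis using s(1) unfolding fits_def
          by (intro disjI1 exI[of _ "p@xa"] exI[of _ xb] exI[of _ "xc@q@y@r"]) auto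
      qed
    qed
  qed
qed

lemma fits_ins_left:
  assumes "fits w (x1 @ u2 @ y1)" "None \<notin> set x1" "None \<notin> set y1"
  shows "fits w (x1 @ None # y1)"
proof -
  from assms(1) consider (f) p x r where "w = p @ x @ r" "x1 @ u2 @ y1 = map Some x"
    | (s) p x q y r where "w = p @ x @ q @ y @ r" "x1 @ u2 @ y1 = map Some x @ None # map Some y"
    unfolding fits_def by metis
  thus ?thesis
  proof cases
    case f
    then obtain xa xb xc where "x = xa@xb@xc" "x1 = map Some xa" "y1 = map Some xc" by (metis map_Some_app3)
    with f show ?thesis unfolding fits_def
      by (intro disjI2 exI[of _ p] exI[of _ xa] exI[of _ xb] exI[of _ xc] exI[of _ r]) auto
  next
    case s
    have "None \<in> set (x1 @ u2 @ y1)" using s(2) by simp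
    hence "None \<in> set u2" using assms by auto
    then obtain B1 B2 where B: "u2 = B1 @ None # B2" "None \<notin> set B1" by (metis split_list_first)
    have "(x1 @ B1) @ None # (B2 @ y1) = map Some x @ None # map Some y" using s(2) B by simp
    hence e: "x1 @ B1 = map Some x" "B2 @ y1 = map Some y"
      using first_None_unique[of "x1@B1" "map Some x"] B assms by auto
    from e(1) obtain xa xb where "x = xa @ xb" "x1 = map Some xa" by (metis map_eq_append_conv)
    moreover from e(2) obtain ya yb where "y = ya @ yb" "y1 = map Some yb" by (metis map_eq_append_conv)
    ultimately show ?thesis using s(1) unfolding fits_def
      by (intro disjI2 exI[of _ p] exI[of _ xa] exI[of _ "xb@q@ya"] exI[of _ yb] exI[of _ r]) auto
  qed
qed




inductive der :: "('n \<times> ('n, 't) dterm) set \<Rightarrow> ('n, 't) dterm \<Rightarrow> ('n, 't) dterm \<Rightarrow> bool"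
  for P where
  dNT: "(A, \<alpha>) \<in> P \<Longrightarrow> der P \<alpha> h \<Longrightarrow> der P (NT A) h"
| dW: "der P (Word x) (Word x)"
| dOne: "der P One One"
| dCat: "der P s hs \<Longrightarrow> der P t ht \<Longrightarrow> der P (Cat s t) (Cat hs ht)"
| dIns: "der P s hs \<Longrightarrow> der P t ht \<Longrightarrow> der P (Ins s t) (Ins hs ht)"

inductive_cases derCatE: "der P (Cat s t) h"
inductive_cases derInsE: "der P (Ins s t) h"
inductive_cases derWE: "der P (Word x) h"
inductive_cases derOneE: "der P One h"
inductive_cases derNTE: "der P (NT A) h"

lemma der_ground: "der P \<beta> h \<Longrightarrow> ground h"
  by (induction rule: der.induct) auto

lemma der_refl: "ground h \<Longrightarrow> der P h h"
  by (induction h) (auto intro: der.intros)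

lemma replace_der: "replace1 B \<beta> t t' \<Longrightarrow> (B, \<beta>) \<in> P \<Longrightarrow> der P t' g \<Longrightarrow> der P t g"
proof (induction arbitrary: g rule: replace1.induct)
  case root thus ?case by (auto intro: der.intros)
next
  case (cat_l s s' t) thus ?case by (auto elim!: derCatE intro: der.intros)
next
  case (cat_r t t' s) thus ?case by (auto elim!: derCatE intro: der.intros)
next
  case (ins_l s s' t) thus ?case by (auto elim!: derInsE intro: der.intros)
next
  case (ins_r t t' s) thus ?case by (auto elim!: derInsE intro: der.intros)
qed

lemma derives_der: "derives P A t \<Longrightarrow> der P t g \<Longrightarrow> der P (NT A) g"
proof (induction arbitrary: g rule: derives.induct)
  case refl thus ?case .
next
  case (step t B \<beta> t') thus ?case using replace_der by metis
qed

definition stp :: "('n \<times> ('n, 't) dterm) set \<Rightarrow> ('n, 't) dterm \<Rightarrow> ('n, 't) dterm \<Rightarrow> bool" where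
  "stp P x y \<longleftrightarrow> (\<exists>B \<beta>. (B, \<beta>) \<in> P \<and> replace1 B \<beta> x y)"

lemma stp_Cat1: "(stp P)\<^sup>*\<^sup>* s s' \<Longrightarrow> (stp P)\<^sup>*\<^sup>* (Cat s t) (Cat s' t)"
proof (induction rule: rtranclp_induct)
  case base show ?case by simp
next
  case (step y z)
  hence "stp P (Cat y t) (Cat z t)" unfolding stp_def by (meson replace1.cat_l)
  with step.IH show ?case by (rule rtranclp.rtrancl_into_rtrancl)
qed

lemma stp_Cat2: "(stp P)\<^sup>*\<^sup>* t t' \<Longrightarrow> (stp P)\<^sup>*\<^sup>* (Cat s t) (Cat s t')"
proof (induction rule: rtranclp_induct)
  case base show ?case by simp
next
  case (step y z)
  hence "stp P (Cat s y) (Cat s z)" unfolding stp_def by (meson replace1.cat_r)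
  with step.IH show ?case by (rule rtranclp.rtrancl_into_rtrancl)
qed

lemma stp_Ins1: "(stp P)\<^sup>*\<^sup>* s s' \<Longrightarrow> (stp P)\<^sup>*\<^sup>* (Ins s t) (Ins s' t)"
proof (induction rule: rtranclp_induct)
  case base show ?case by simp
next
  case (step y z)
  hence "stp P (Ins y t) (Ins z t)" unfolding stp_def by (meson replace1.ins_l)
  with step.IH show ?case by (rule rtranclp.rtrancl_into_rtrancl)
qed

lemma stp_Ins2: "(stp P)\<^sup>*\<^sup>* t t' \<Longrightarrow> (stp P)\<^sup>*\<^sup>* (Ins s t) (Ins s t')"
proof (induction rule: rtranclp_induct)
  case base show ?case by simp
next
  case (step y z)
  hence "stp P (Ins s y) (Ins s z)" unfolding stp_def by (meson replace1.ins_r)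
  with step.IH show ?case by (rule rtranclp.rtrancl_into_rtrancl)
qed

lemma der_stp: "der P \<alpha> g \<Longrightarrow> (stp P)\<^sup>*\<^sup>* \<alpha> g"
proof (induction rule: der.induct)
  case (dNT A \<alpha> h)
  have "stp P (NT A) \<alpha>" using dNT(1) by (auto simp: stp_def intro: replace1.intros)
  thus ?case using dNT(3) by (meson converse_rtranclp_into_rtranclp)
next
  case (dCat s hs t ht) thus ?case by (meson rtranclp_trans stp_Cat1 stp_Cat2)
next
  case (dIns s hs t ht) thus ?case by (meson rtranclp_trans stp_Ins1 stp_Ins2)
qed auto

lemma stp_derives: "(stp P)\<^sup>*\<^sup>* (NT A) g \<Longrightarrow> derives P A g"
proof (induction rule: rtranclp_induct)
  case base show ?case by (rule derives.refl)
next
  case (step y z)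
  then obtain B \<beta> where "(B, \<beta>) \<in> P" "replace1 B \<beta> y z" unfolding stp_def by blast
  with step.IH show ?case by (rule derives.step)
qed

lemma der_lang: "der P (NT S) g \<Longrightarrow> tval g \<in> lang P S"
proof -
  assume h: "der P (NT S) g"
  have "derives P S g" using stp_derives[OF der_stp[OF h]] .
  moreover have "ground g" using der_ground[OF h] .
  ultimately show ?thesis unfolding lang_def by blast
qed

fun subs :: "('n, 't) dterm \<Rightarrow> ('n, 't) dterm set" where
  "subs (NT A) = {NT A}"
| "subs (Word x) = {Word x}"
| "subs One = {One}"
| "subs (Cat s t) = insert (Cat s t) (subs s \<union> subs t)"
| "subs (Ins s t) = insert (Ins s t) (subs s \<union> subs t)"

lemma subs_self: "t \<in> subs t" by (cases t) auto
lemma subs_finite: "finite (subs t)" by (induction t) auto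
lemma subs_trans: "u \<in> subs t \<Longrightarrow> subs u \<subseteq> subs t" by (induction t) auto

lemma trk_le1: "ground h \<Longrightarrow> correct1 N rk h \<Longrightarrow> trk rk h \<le> 1"
  by (cases h) auto

lemma cN_trk: "ground h \<Longrightarrow> correct1 N rk h \<Longrightarrow> cN (tval h) = trk rk h"
proof (induction h)
  case (Ins s t)
  hence "cN (tval s) \<ge> 1" by simp
  hence "None \<in> set (tval s)" by (metis cN_zero not_one_le_zero)
  then obtain x y where "tval s = x @ None # y" "ins1 (tval s) (tval t) = x @ tval t @ y"
    using ins1_split by metis
  thus ?case using Ins by auto
qed auto

lemma None_in: "ground (h::('n,abcd) dterm) \<Longrightarrow> correct1 N rk h \<Longrightarrow> 1 \<le> trk rk h \<Longrightarrow> None \<in> set (tval h)"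
proof -
  assume h: "ground h" "correct1 N rk h" "1 \<le> trk rk h"
  have "cN (tval h) \<noteq> 0" using cN_trk[OF h(1,2)] h(3) by simp
  thus ?thesis by (metis cN_zero)
qed

lemma cnt_Ins: "ground s \<Longrightarrow> correct1 N rk s \<Longrightarrow> 1 \<le> trk rk s \<Longrightarrow>
   cnt x (tval (Ins s t)) = cnt x (tval s) + cnt x (tval t) \<and> sz (tval (Ins s t)) = sz (tval s) + sz (tval t)"
proof -
  assume "ground s" "correct1 N rk s" "1 \<le> trk rk s"
  hence "None \<in> set (tval s)" by (rule None_in)
  then obtain x y where "tval s = x @ None # y" "ins1 (tval s) (tval t) = x @ tval t @ y"
    using ins1_split by metis
  thus ?thesis by auto
qed

lemma fits_down: "ground h \<Longrightarrow> correct1 N rk h \<Longrightarrow> fits w (tval h) \<Longrightarrow> h0 \<in> subs h \<Longrightarrow>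
   ground h0 \<and> correct1 N rk h0 \<and> fits w (tval h0)"
proof (induction h)
  case (Cat s t)
  have "fits w (tval s)" using fits_mid[of w "[]" "tval s" "tval t"] Cat.prems by simp
  moreover have "fits w (tval t)" using fits_mid[of w "tval s" "tval t" "[]"] Cat.prems by simp
  ultimately show ?case using Cat by auto
next
  case (Ins s t)
  have g: "ground s" "correct1 N rk s" "1 \<le> trk rk s" using Ins.prems by auto
  hence "None \<in> set (tval s)" by (rule None_in)
  then obtain x y where xy: "tval s = x @ None # y" "None \<notin> set x" "ins1 (tval s) (tval t) = x @ tval t @ y"
    using ins1_split by metis
  have "cN (tval s) = 1" using cN_trk[OF g(1,2)] trk_le1[OF g(1,2)] g(3) by simp
  hence "None \<notin> set y" using xy by (simp add: cN_zero[symmetric])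
  have f: "fits w (x @ tval t @ y)" using Ins.prems xy by simp
  have "fits w (tval t)" using fits_mid[OF f] .
  moreover have "fits w (tval s)" using fits_ins_left[OF f xy(2) \<open>None \<notin> set y\<close>] xy by simp
  ultimately show ?case using Ins by auto
qed (auto)

lemma heavy: "ground h \<Longrightarrow> correct1 N rk h \<Longrightarrow> (\<forall>z. Word z \<in> subs h \<longrightarrow> length z \<le> 2*s) \<Longrightarrow>
   2*s < sz (tval h) \<Longrightarrow> \<exists>h0\<in>subs h. s \<le> sz (tval h0) \<and> sz (tval h0) \<le> 2*s"
proof (induction h)
  case (Word x) thus ?case by simp
next
  case (Cat h1 h2)
  show ?case
  proof (cases "sz (tval h2) \<le> sz (tval h1)")
    case True
    show ?thesis
    proof (cases "sz (tval h1) \<le> 2*s")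
      case True thus ?thesis using Cat.prems \<open>sz (tval h2) \<le> sz (tval h1)\<close> by (auto intro!: bexI[of _ h1] subs_self)
    next
      case False thus ?thesis using Cat by auto
    qed
  next
    case False
    show ?thesis
    proof (cases "sz (tval h2) \<le> 2*s")
      case True thus ?thesis using Cat.prems False by (auto intro!: bexI[of _ h2] subs_self)
    next
      case False thus ?thesis using Cat by auto
    qed
  qed
next
  case (Ins h1 h2)
  have e: "sz (tval (Ins h1 h2)) = sz (tval h1) + sz (tval h2)" using cnt_Ins[of h1 N rk] Ins.prems by auto
  show ?case
  proof (cases "sz (tval h2) \<le> sz (tval h1)")
    case True
    show ?thesis
    proof (cases "sz (tval h1) \<le> 2*s")
      case True thus ?thesis using Ins.prems e \<open>sz (tval h2) \<le> sz (tval h1)\<close> by (auto intro!: bexI[of _ h1] subs_self)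
    next
      case False thus ?thesis using Ins by auto
    qed
  next
    case False
    show ?thesis
    proof (cases "sz (tval h2) \<le> 2*s")
      case True thus ?thesis using Ins.prems e False by (auto intro!: bexI[of _ h2] subs_self)
    next
      case False thus ?thesis using Ins by auto
    qed
  qed
qed auto




lemma der_correct:
  "der P \<beta> h \<Longrightarrow> dcfg1 N rk P S \<Longrightarrow> correct1 N rk \<beta> \<Longrightarrow> correct1 N rk h \<and> trk rk h = trk rk \<beta>"
proof (induction rule: der.induct)
  case (dNT A \<alpha> h)
  from dNT.prems(1) dNT(1) have "correct1 N rk \<alpha>" "trk rk \<alpha> = rk A" unfolding dcfg1_def by auto
  with dNT show ?case by simp
qed auto

definition ctxOK :: "('n \<times> ('n, abcd) dterm) set \<Rightarrow> ('n, abcd) dterm \<Rightarrow> ('n, abcd) dterm \<Rightarrow> bool" where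
 "ctxOK P \<beta> h \<longleftrightarrow> (\<forall>h'. der P \<beta> h' \<longrightarrow> (\<forall>x y. int (cnt x (tval h')) - int (cnt y (tval h')) = int (cnt x (tval h)) - int (cnt y (tval h))))"

lemma ctx_NT: "ctxOK P (NT A) h \<Longrightarrow> (A, \<alpha>) \<in> P \<Longrightarrow> ctxOK P \<alpha> h"
  unfolding ctxOK_def by (meson dNT)

lemma ctx_Cat: assumes H: "ctxOK P (Cat s t) (Cat hs ht)" "der P s hs" "der P t ht"
  shows "ctxOK P s hs \<and> ctxOK P t ht"
proof
  show "ctxOK P s hs" unfolding ctxOK_def
  proof (intro allI impI)
    fix h' x y assume "der P s h'"
    hence "der P (Cat s t) (Cat h' ht)" using H(3) by (rule dCat)
    with H(1) have "int (cnt x (tval (Cat h' ht))) - int (cnt y (tval (Cat h' ht))) = int (cnt x (tval (Cat hs ht))) - int (cnt y (tval (Cat hs ht)))" unfolding ctxOK_def by blast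
    thus "int (cnt x (tval h')) - int (cnt y (tval h')) = int (cnt x (tval hs)) - int (cnt y (tval hs))" by simp
  qed
  show "ctxOK P t ht" unfolding ctxOK_def
  proof (intro allI impI)
    fix h' x y assume "der P t h'"
    with H(2) have "der P (Cat s t) (Cat hs h')" by (rule dCat)
    with H(1) have "int (cnt x (tval (Cat hs h'))) - int (cnt y (tval (Cat hs h'))) = int (cnt x (tval (Cat hs ht))) - int (cnt y (tval (Cat hs ht)))" unfolding ctxOK_def by blast
    thus "int (cnt x (tval h')) - int (cnt y (tval h')) = int (cnt x (tval ht)) - int (cnt y (tval ht))" by simp
  qed
qed

lemma der_Ins_cnt: "der P s h \<Longrightarrow> dcfg1 N rk P S \<Longrightarrow> correct1 N rk s \<Longrightarrow> 1 \<le> trk rk s \<Longrightarrow>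
   cnt x (tval (Ins h g)) = cnt x (tval h) + cnt x (tval g)"
  using der_correct[of P s h N rk S] der_ground[of P s h] cnt_Ins[of h N rk x g] by auto

lemma ctx_Ins: assumes H: "ctxOK P (Ins s t) (Ins hs ht)" "der P s hs" "der P t ht"
  and G: "dcfg1 N rk P S" and C: "correct1 N rk (Ins s t)"
  shows "ctxOK P s hs \<and> ctxOK P t ht"
proof -
  have cs: "correct1 N rk s" "1 \<le> trk rk s" using C by auto
  note e = der_Ins_cnt[OF _ G cs]
  show ?thesis
  proof
    show "ctxOK P s hs" unfolding ctxOK_def
    proof (intro allI impI)
      fix h' x y assume d: "der P s h'"
      hence "der P (Ins s t) (Ins h' ht)" using H(3) by (rule dIns)
      with H(1) have "int (cnt x (tval (Ins h' ht))) - int (cnt y (tval (Ins h' ht))) = int (cnt x (tval (Ins hs ht))) - int (cnt y (tval (Ins hs ht)))" unfolding ctxOK_def by blast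
      thus "int (cnt x (tval h')) - int (cnt y (tval h')) = int (cnt x (tval hs)) - int (cnt y (tval hs))"
        using e[OF d] e[OF H(2)] by simp
    qed
    show "ctxOK P t ht" unfolding ctxOK_def
    proof (intro allI impI)
      fix h' x y assume "der P t h'"
      with H(2) have "der P (Ins s t) (Ins hs h')" by (rule dIns)
      with H(1) have "int (cnt x (tval (Ins hs h'))) - int (cnt y (tval (Ins hs h'))) = int (cnt x (tval (Ins hs ht))) - int (cnt y (tval (Ins hs ht)))" unfolding ctxOK_def by blast
      thus "int (cnt x (tval h')) - int (cnt y (tval h')) = int (cnt x (tval ht)) - int (cnt y (tval ht))"
        using e[OF H(2)] by simp
    qed
  qed
qed

definition TT :: "'n set \<Rightarrow> ('n \<times> ('n, 't) dterm) set \<Rightarrow> ('n, 't) dterm set" where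
  "TT N P = NT ` N \<union> (\<Union>p\<in>P. subs (snd p))"

definition KK :: "'n set \<Rightarrow> ('n \<times> ('n, abcd) dterm) set \<Rightarrow> nat" where
  "KK N P = Max ((\<lambda>\<beta>. length (tval (SOME h. der P \<beta> h))) ` TT N P)"

lemma TT_finite: "finite N \<Longrightarrow> finite P \<Longrightarrow> finite (TT N P)"
  unfolding TT_def using subs_finite by blast

lemma TT_rule: "(A, \<alpha>) \<in> P \<Longrightarrow> \<alpha> \<in> TT N P"
  unfolding TT_def using subs_self by fastforce

lemma TT_Cat: "Cat s t \<in> TT N P \<Longrightarrow> s \<in> TT N P \<and> t \<in> TT N P"
proof -
  assume "Cat s t \<in> TT N P"
  then obtain p where "p \<in> P" "Cat s t \<in> subs (snd p)" unfolding TT_def by auto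
  hence "subs (Cat s t) \<subseteq> subs (snd p)" by (rule subs_trans[OF \<open>Cat s t \<in> subs (snd p)\<close>] | metis subs_trans)
  hence "s \<in> subs (snd p)" "t \<in> subs (snd p)" using subs_self by auto
  thus ?thesis unfolding TT_def using \<open>p \<in> P\<close> by auto
qed

lemma TT_Ins: "Ins s t \<in> TT N P \<Longrightarrow> s \<in> TT N P \<and> t \<in> TT N P"
proof -
  assume "Ins s t \<in> TT N P"
  then obtain p where "p \<in> P" "Ins s t \<in> subs (snd p)" unfolding TT_def by auto
  hence "subs (Ins s t) \<subseteq> subs (snd p)" by (metis subs_trans)
  hence "s \<in> subs (snd p)" "t \<in> subs (snd p)" using subs_self by auto
  thus ?thesis unfolding TT_def using \<open>p \<in> P\<close> by auto
qed

lemma KK_ge: "finite N \<Longrightarrow> finite P \<Longrightarrow> \<beta> \<in> TT N P \<Longrightarrow> length (tval (SOME h. der P \<beta> h)) \<le> KK N P"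
  unfolding KK_def by (rule Max_ge) (auto intro: TT_finite)

lemma bound: assumes "finite N" "finite P" "\<beta> \<in> TT N P" "der P \<beta> h" "ctxOK P \<beta> h"
  shows "\<bar>int (cnt x (tval h)) - int (cnt y (tval h))\<bar> \<le> int (KK N P)"
proof -
  define hb where "hb = (SOME h. der P \<beta> h)"
  have "der P \<beta> hb" unfolding hb_def using assms(4) by (rule someI)
  hence e: "int (cnt x (tval hb)) - int (cnt y (tval hb)) = int (cnt x (tval h)) - int (cnt y (tval h))"
    using assms(5) unfolding ctxOK_def by blast
  have "cnt x (tval hb) \<le> length (tval hb)" "cnt y (tval hb) \<le> length (tval hb)" by (rule cnt_le)+
  moreover have "length (tval hb) \<le> KK N P" unfolding hb_def using KK_ge assms(1-3) by blast
  ultimately show ?thesis using e by linarith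
qed

lemma nodes_bal:
  "der P \<beta> h \<Longrightarrow> dcfg1 N rk P S \<Longrightarrow> \<beta> \<in> TT N P \<Longrightarrow> correct1 N rk \<beta> \<Longrightarrow> ctxOK P \<beta> h \<Longrightarrow>
   \<forall>h0\<in>subs h. (\<forall>x y. \<bar>int (cnt x (tval h0)) - int (cnt y (tval h0))\<bar> \<le> int (KK N P)) \<and>
      (\<forall>z. h0 = Word z \<longrightarrow> length z \<le> KK N P)"
proof (induction rule: der.induct)
  case (dNT A \<alpha> h)
  have "correct1 N rk \<alpha>" using dNT.prems(1) dNT(1) unfolding dcfg1_def by auto
  thus ?case using dNT TT_rule ctx_NT by metis
next
  case (dW x)
  have fin: "finite N" "finite P" using dW.prems(1) unfolding dcfg1_def by auto
  have "(SOME h. der P (Word x) h) = Word x"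
  proof -
    have "der P (Word x) (SOME h. der P (Word x) h)" by (rule someI) (rule der.dW)
    thus ?thesis by (auto elim: derWE)
  qed
  hence "length x \<le> KK N P" using KK_ge[OF fin dW.prems(2)] by simp
  thus ?case using bound[OF fin dW.prems(2) der.dW dW.prems(4)] by auto
next
  case dOne
  have fin: "finite N" "finite P" using dOne.prems(1) unfolding dcfg1_def by auto
  thus ?case using bound[OF fin dOne.prems(2) der.dOne dOne.prems(4)] by auto
next
  case (dCat s hs t ht)
  have fin: "finite N" "finite P" using dCat.prems(1) unfolding dcfg1_def by auto
  have ctx: "ctxOK P s hs" "ctxOK P t ht" using ctx_Cat[OF dCat.prems(4) dCat(1,2)] by auto
  have tt: "s \<in> TT N P" "t \<in> TT N P" using TT_Cat[OF dCat.prems(2)] by auto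
  have cc: "correct1 N rk s" "correct1 N rk t" using dCat.prems(3) by auto
  have top: "\<forall>x y. \<bar>int (cnt x (tval (Cat hs ht))) - int (cnt y (tval (Cat hs ht)))\<bar> \<le> int (KK N P)"
    using bound[OF fin dCat.prems(2) der.dCat[OF dCat(1,2)] dCat.prems(4)] by blast
  show ?case using dCat.IH(1)[OF dCat.prems(1) tt(1) cc(1) ctx(1)] dCat.IH(2)[OF dCat.prems(1) tt(2) cc(2) ctx(2)] top
    by auto
next
  case (dIns s hs t ht)
  have fin: "finite N" "finite P" using dIns.prems(1) unfolding dcfg1_def by auto
  have ctx: "ctxOK P s hs" "ctxOK P t ht" using ctx_Ins[OF dIns.prems(4) dIns(1,2) dIns.prems(1,3)] by auto
  have tt: "s \<in> TT N P" "t \<in> TT N P" using TT_Ins[OF dIns.prems(2)] by auto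
  have cc: "correct1 N rk s" "correct1 N rk t" using dIns.prems(3) by auto
  have top: "\<forall>x y. \<bar>int (cnt x (tval (Ins hs ht))) - int (cnt y (tval (Ins hs ht)))\<bar> \<le> int (KK N P)"
    using bound[OF fin dIns.prems(2) der.dIns[OF dIns(1,2)] dIns.prems(4)] by blast
  show ?case using dIns.IH(1)[OF dIns.prems(1) tt(1) cc(1) ctx(1)] dIns.IH(2)[OF dIns.prems(1) tt(2) cc(2) ctx(2)] top
    by auto
qed




definition wd :: "nat \<Rightarrow> abcd list" where
  "wd M = replicate (2*M) b @ replicate M a @ replicate (2*M) c @ replicate M a @ replicate (2*M) d"

lemma wd_len: "length (wd M) = 8*M" by (simp add: wd_def)

lemma wd_MIX: "wd M \<in> MIX4"
  unfolding MIX4_def count_letter_def wd_def by (simp add: filter_replicate)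

lemma wd_nth: "n < 8*M \<Longrightarrow> wd M ! n = (if n < 2*M then b else if n < 3*M then a else if n < 5*M then c else if n < 6*M then a else d)"
  unfolding wd_def by (auto simp: nth_append)

lemma fac2: assumes "wd M = p @ x @ r" "u \<in> set x" "v \<in> set x" "u \<noteq> a" "v \<noteq> a" "u \<noteq> v"
  shows "M < length x"
proof -
  obtain i where i: "i < length x" "x ! i = u" using assms(2) by (auto simp: in_set_conv_nth)
  obtain j where j: "j < length x" "x ! j = v" using assms(3) by (auto simp: in_set_conv_nth)
  have L: "length p + length x \<le> 8*M" using arg_cong[OF assms(1), of length] wd_len by simp
  have pu: "wd M ! (length p + i) = u" using assms(1) i by (simp add: nth_append)
  have pv: "wd M ! (length p + j) = v" using assms(1) j by (simp add: nth_append)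
  have nu: "wd M ! (length p + i) = (if length p + i < 2*M then b else if length p + i < 3*M then a else if length p + i < 5*M then c else if length p + i < 6*M then a else d)"
    using L i by (intro wd_nth) simp
  have nv: "wd M ! (length p + j) = (if length p + j < 2*M then b else if length p + j < 3*M then a else if length p + j < 5*M then c else if length p + j < 6*M then a else d)"
    using L j by (intro wd_nth) simp
  show ?thesis using pu pv nu nv assms(4-6) i(1) j(1) by (auto split: if_splits)
qed

lemma fits_root: "fits w (map Some w)"
  unfolding fits_def by (intro disjI1 exI[of _ "[]"] exI[of _ w]) simp

lemma pigeon: assumes "fits (wd M) v" "Some b \<in> set v" "Some c \<in> set v" "Some d \<in> set v"
  shows "M < sz v"
proof -
  from assms(1) consider (f) p x r where "wd M = p @ x @ r" "v = map Some x"
    | (s) p x q y r where "wd M = p @ x @ q @ y @ r" "v = map Some x @ None # map Some y"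
    unfolding fits_def by metis
  thus ?thesis
  proof cases
    case f
    hence "b \<in> set x" "c \<in> set x" using assms by auto
    thus ?thesis using fac2[OF f(1), of b c] f(2) by simp
  next
    case s
    have hx: "\<And>u v. u \<in> set x \<Longrightarrow> v \<in> set x \<Longrightarrow> u \<noteq> a \<Longrightarrow> v \<noteq> a \<Longrightarrow> u \<noteq> v \<Longrightarrow> M < length x"
      using fac2[of M p x "q @ y @ r"] s(1) by simp
    have hy: "\<And>u v. u \<in> set y \<Longrightarrow> v \<in> set y \<Longrightarrow> u \<noteq> a \<Longrightarrow> v \<noteq> a \<Longrightarrow> u \<noteq> v \<Longrightarrow> M < length y"
      using fac2[of M "p @ x @ q" y r] s(1) by simp
    have "b \<in> set x \<or> b \<in> set y" "c \<in> set x \<or> c \<in> set y" "d \<in> set x \<or> d \<in> set y"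
      using assms(2-4) s(2) by auto
    hence "M < length x \<or> M < length y"
      using hx[of b c] hx[of b d] hx[of c d] hy[of b c] hy[of b d] hy[of c d] by auto
    thus ?thesis using s(2) by auto
  qed
qed

lemma cnt_map: "cnt x (map Some w) = count_letter x w"
  by (induction w) (auto simp: count_letter_def)

lemma mix_cnt: "w \<in> MIX4 \<Longrightarrow> cnt x (map Some w) = cnt y (map Some w)"
  unfolding cnt_map MIX4_def by (cases x; cases y) auto

lemma present: assumes "\<forall>x y. \<bar>int (cnt x v) - int (cnt y v)\<bar> \<le> int K" "4*K < sz v"
  shows "Some z \<in> set v"
proof (rule ccontr)
  assume "Some z \<notin> set v"
  hence "cnt z v = 0" by (induction v) auto
  have k: "cnt x v \<le> K" for x
  proof -
    have "\<bar>int (cnt x v) - int (cnt z v)\<bar> \<le> int K" using assms(1) by blast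
    thus ?thesis using \<open>cnt z v = 0\<close> by simp
  qed
  have "sz v \<le> 4*K" unfolding sz_cnt using k[of a] k[of b] k[of c] k[of d] by linarith
  thus False using assms(2) by simp
qed

theorem theorem5:
  fixes N :: "'n set" and rk :: "'n \<Rightarrow> nat"
    and P :: "('n \<times> ('n, abcd) dterm) set" and S :: 'n
  assumes "dcfg1 N rk P S"
  shows "lang P S \<noteq> map Some ` MIX4"
proof
  assume L: "lang P S = map Some ` MIX4"
  have G: "dcfg1 N rk P S" by fact
  have fin: "finite N" "finite P" "S \<in> N" using assms unfolding dcfg1_def by auto
  define K where "K = KK N P"
  define s where "s = 4*K+1"
  define M where "M = 2*s"
  have "map Some (wd M) \<in> lang P S" using L wd_MIX by blast
  hence "\<exists>t. map Some (wd M) = tval t \<and> derives P S t \<and> ground t" unfolding lang_def by simp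
  then obtain t where t0: "map Some (wd M) = tval t" "derives P S t" "ground t" by blast
  have t: "derives P S t" "ground t" "tval t = map Some (wd M)" using t0 by simp_all
  have dt: "der P (NT S) t" using derives_der[OF t(1) der_refl[OF t(2)]] .
  have ct: "correct1 N rk t" using der_correct[OF dt G] fin(3) by simp
  have ctx: "ctxOK P (NT S) t"
    unfolding ctxOK_def
  proof (intro allI impI)
    fix h' x y assume "der P (NT S) h'"
    hence "tval h' \<in> lang P S" by (rule der_lang)
    hence "tval h' \<in> map Some ` MIX4" using L by simp
    then obtain w' where "w' \<in> MIX4" "tval h' = map Some w'" by blast
    hence "cnt x (tval h') = cnt y (tval h')" using mix_cnt by metis
    moreover have "cnt x (tval t) = cnt y (tval t)" using t(3) wd_MIX mix_cnt by metis
    ultimately show "int (cnt x (tval h')) - int (cnt y (tval h')) = int (cnt x (tval t)) - int (cnt y (tval t))" by simp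
  qed
  have NTS: "NT S \<in> TT N P" unfolding TT_def using fin(3) by blast
  have bal: "\<forall>h0\<in>subs t. (\<forall>x y. \<bar>int (cnt x (tval h0)) - int (cnt y (tval h0))\<bar> \<le> int K) \<and> (\<forall>z. h0 = Word z \<longrightarrow> length z \<le> K)"
    using nodes_bal[OF dt G NTS _ ctx] fin(3) unfolding K_def by simp
  have szt: "sz (tval t) = 8*M" using t(3) wd_len by simp
  have wl: "\<forall>z. Word z \<in> subs t \<longrightarrow> length z \<le> 2*s" using bal unfolding s_def by fastforce
  obtain h0 where h0: "h0 \<in> subs t" "s \<le> sz (tval h0)" "sz (tval h0) \<le> 2*s"
    using heavy[OF t(2) ct wl] szt s_def unfolding M_def by auto
  have fh: "fits (wd M) (tval h0)" using fits_down[OF t(2) ct _ h0(1)] t(3) fits_root by metis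
  have bh: "\<forall>x y. \<bar>int (cnt x (tval h0)) - int (cnt y (tval h0))\<bar> \<le> int K" using bal h0(1) by blast
  have "4*K < sz (tval h0)" using h0(2) unfolding s_def by simp
  hence "Some b \<in> set (tval h0)" "Some c \<in> set (tval h0)" "Some d \<in> set (tval h0)" using present[OF bh] by auto
  hence "M < sz (tval h0)" using pigeon[OF fh] by blast
  thus False using h0(3) unfolding M_def by simp
qed


end
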